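(* In the rebuilding game described in the context, there is a deterministic strategy for the player that finishes all $T$ rounds with total time cost $O\!\left(\frac{C_rKd}{\gamma_g}(m+T)\right)$.
   Context: Parameters: integers $m>0$ and $d>0$, update frequency $0<\gamma_g<1$, rebuilding cost $C_r\ge1$, weight range $K\ge1$, size reduction parameter $k=m^{1/d}\ge2$, and an integer number of rounds $T>0$. The game is played between a player and an adversary in rounds $t=1,\ldots,T$; the player's moves (steps) are indexed $s=1,2,\ldots$, and each step $s$ has an associated tuple $\mathrm{prev}^{(s)}=(\mathrm{prev}^{(s)}_0,\ldots,\mathrm{prev}^{(s)}_d)\in[T]^{d+1}$, known to both; initially $\mathrm{prev}^{(1)}_i=1$ for all levels $i\in\{0,\ldots,d\}$. At the start of each round $t$: (1) the adversary chooses a positive real weight $W^{(t)}$ with $\log W^{(t)}\in(-K,K)$, hidden from the player; (2) while either $\sum_{i=0}^dW^{(\mathrm{prev}^{(s)}_i)}>2(d+1)W^{(t)}$, or for some level $l$ at least $\gamma_gm/k^l$ rounds have passed since level $l$ was last rebuilt, the adversary may (but need not) force the player to perform a fixing step; the player may also perform fixing steps voluntarily at any time. In a fixing step the player picks a level $i$, and sets $\mathrm{prev}^{(s+1)}_j=t$ for $j\in\{i,\ldots,d\}$ and $\mathrm{prev}^{(s+1)}_j=\mathrm{prev}^{(s)}_j$ for $j<i$ (a fix at level $i$, which rebuilds levels $j\ge i$); this step costs $C_rm/k^i$. (3) The round finishes when the player no longer performs fixing steps. The total time cost is the sum of the costs of all fixing steps plus $O(1)$ per round. *)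

theory Defs
  imports Complex_Main
begin

text \<open>A fixing step is recorded as (round, level, forced?).\<close>
type_synonym step = "nat \<times> nat \<times> bool"

definition kpar :: "nat \<Rightarrow> nat \<Rightarrow> real" where
  "kpar m d = real m powr (1 / real d)"

text \<open>prev_j after the given history of fixing steps: the round of the last fix
  at a level i \<le> j (fix at level i rebuilds all levels j \<ge> i); initially 1.\<close>
definition prev_lvl :: "step list \<Rightarrow> nat \<Rightarrow> nat" where
  "prev_lvl h j = foldl (\<lambda>p (r, i, b). if i \<le> j then r else p) 1 h"

definition may_force ::
  "nat \<Rightarrow> nat \<Rightarrow> real \<Rightarrow> (nat \<Rightarrow> real) \<Rightarrow> nat \<Rightarrow> step list \<Rightarrow> bool" where
  "may_force m d \<gamma> W t h \<longleftrightarrow>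
     (\<Sum>i\<le>d. W (prev_lvl h i)) > 2 * (real d + 1) * W t
   \<or> (\<exists>l\<le>d. real t - real (prev_lvl h l) \<ge> \<gamma> * real m / kpar m d ^ l)"

text \<open>One transition of the game from configuration (t, h): t is the current round
  (t > T means the game is over), h is the full history of fixing steps so far.
  vol t h: the player's voluntary decision (Some i = fix at level i, None = stop);
  frc t h: the level the player picks when forced; F t h: adversary wishes to force
  (effective only if may_force holds).\<close>
definition game_step ::
  "nat \<Rightarrow> nat \<Rightarrow> real \<Rightarrow> nat \<Rightarrow>
   (nat \<Rightarrow> step list \<Rightarrow> nat option) \<Rightarrow> (nat \<Rightarrow> step list \<Rightarrow> nat) \<Rightarrow>
   (nat \<Rightarrow> real) \<Rightarrow> (nat \<Rightarrow> step list \<Rightarrow> bool) \<Rightarrow>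
   nat \<times> step list \<Rightarrow> nat \<times> step list" where
  "game_step m d \<gamma> T vol frc W F c =
     (case c of (t, h) \<Rightarrow>
       if T < t then (t, h)
       else (case vol t h of
               Some i \<Rightarrow> (t, h @ [(t, i, False)])
             | None \<Rightarrow> if F t h \<and> may_force m d \<gamma> W t h
                       then (t, h @ [(t, frc t h, True)])
                       else (Suc t, h)))"

definition game_config ::
  "nat \<Rightarrow> nat \<Rightarrow> real \<Rightarrow> nat \<Rightarrow>
   (nat \<Rightarrow> step list \<Rightarrow> nat option) \<Rightarrow> (nat \<Rightarrow> step list \<Rightarrow> nat) \<Rightarrow>
   (nat \<Rightarrow> real) \<Rightarrow> (nat \<Rightarrow> step list \<Rightarrow> bool) \<Rightarrow> nat \<Rightarrow> nat \<times> step list" where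
  "game_config m d \<gamma> T vol frc W F n = (game_step m d \<gamma> T vol frc W F ^^ n) (1, [])"

definition fix_cost :: "nat \<Rightarrow> nat \<Rightarrow> real \<Rightarrow> step list \<Rightarrow> real" where
  "fix_cost m d Cr h = sum_list (map (\<lambda>(r, i, b). Cr * real m / kpar m d ^ i) h)"

end

theory Submission
  imports Defs
begin

definition cnt :: "step list \<Rightarrow> nat \<Rightarrow> nat" where
  "cnt h j = foldl (\<lambda>c (r, i, b). if b \<and> i = j then Suc c else if \<not> b \<and> i \<le> j then 0 else c) 0 h"

lemma cnt_snoc: "cnt (h @ [(r,i,b)]) j = (if b \<and> i = j then Suc (cnt h j) else if \<not> b \<and> i \<le> j then 0 else cnt h j)"
  by (simp add: cnt_def)

lemma cnt_nil: "cnt [] j = 0" by (simp add: cnt_def)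

lemma prev_snoc: "prev_lvl (h @ [(r,i,b)]) j = (if i \<le> j then r else prev_lvl h j)"
  by (simp add: prev_lvl_def)

lemma prev_nil: "prev_lvl [] j = 1" by (simp add: prev_lvl_def)

lemma cost_snoc: "fix_cost m d Cr (h @ [(r,i,b)]) = fix_cost m d Cr h + Cr * real m / kpar m d ^ i"
  by (simp add: fix_cost_def)

lemma cost_nil: "fix_cost m d Cr [] = 0" by (simp add: fix_cost_def)

lemma prev_range: "prev_lvl h j = 1 \<or> (\<exists>x\<in>set h. prev_lvl h j = fst x)"
proof (induction h rule: rev_induct)
  case Nil then show ?case by (simp add: prev_nil)
next
  case (snoc x h)
  obtain r i b where x: "x = (r,i,b)" by (cases x) auto
  show ?case using snoc unfolding x prev_snoc by auto
qed

lemma prev_bounds: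
  assumes "\<forall>x\<in>set h. 1 \<le> fst x \<and> fst x \<le> u" "1 \<le> u"
  shows "1 \<le> prev_lvl h j \<and> prev_lvl h j \<le> u"
  using prev_range[of h j] assms by auto

lemma exp_pow_bound: "exp (2 * real n) \<le> (2::real) ^ (4*n)"
proof -
  have "exp (2 * real n) = exp 1 ^ (2*n)" using exp_of_nat_mult[of "2*n" 1] by simp
  also have "\<dots> \<le> 3 ^ (2*n)" by (rule power_mono) (use exp_le in auto)
  also have "\<dots> = 9 ^ n" by (simp add: power_mult)
  also have "\<dots> \<le> 16 ^ n" by (rule power_mono) auto
  also have "\<dots> = 2 ^ (4*n)" by (simp add: power_mult)
  finally show ?thesis .
qed

fun fs :: "(nat \<Rightarrow> bool) \<Rightarrow> nat \<Rightarrow> nat" where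
  "fs ok 0 = 0"
| "fs ok (Suc j) = (if ok (Suc j) then Suc j else fs ok j)"

lemma fs_le: "fs ok j \<le> j"
  by (induction j) auto

lemma fs_ok: "fs ok j = 0 \<or> ok (fs ok j)"
  by (induction j) auto

lemma fs_skip: "fs ok j < l \<Longrightarrow> l \<le> j \<Longrightarrow> \<not> ok l"
proof (induction j)
  case 0 then show ?case by simp
next
  case (Suc j)
  show ?case
  proof (cases "ok (Suc j)")
    case True then show ?thesis using Suc.prems by simp
  next
    case False
    then show ?thesis using Suc by (cases "l = Suc j") auto
  qed
qed

fun Mx :: "(nat \<Rightarrow> real) \<Rightarrow> step list \<Rightarrow> nat \<Rightarrow> real" where
  "Mx W h 0 = W (prev_lvl h 0)"
| "Mx W h (Suc j) = max (Mx W h j) (W (prev_lvl h (Suc j)))"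

lemma Mx_mono: "i \<le> j \<Longrightarrow> Mx W h i \<le> Mx W h j"
proof (induction j)
  case 0 then show ?case by simp
next
  case (Suc j) then show ?case by (cases "i = Suc j") (auto simp: le_Suc_eq)
qed

lemma W_le_Mx: "i \<le> j \<Longrightarrow> W (prev_lvl h i) \<le> Mx W h j"
proof -
  assume "i \<le> j"
  have "W (prev_lvl h i) \<le> Mx W h i" by (cases i) auto
  also have "\<dots> \<le> Mx W h j" using Mx_mono \<open>i \<le> j\<close> by blast
  finally show ?thesis .
qed

lemma Mx_bnd:
  assumes "\<And>i. i \<le> j \<Longrightarrow> lo < W (prev_lvl h i) \<and> W (prev_lvl h i) < hi"
  shows "lo < Mx W h j \<and> Mx W h j < hi"
  using assms by (induction j) (auto simp: max_def)

lemma Mx_fix_low: "j < s \<Longrightarrow> Mx W (h @ [(t,s,b)]) j = Mx W h j"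
  by (induction j) (auto simp: prev_snoc)

lemma Mx_fix_high: "s \<le> j \<Longrightarrow> Mx W (h @ [(t,s,b)]) j = (if s = 0 then W t else max (Mx W h (s-1)) (W t))"
proof (induction j)
  case 0 then show ?case by (simp add: prev_snoc)
next
  case (Suc j)
  show ?case
  proof (cases "s = Suc j")
    case True
    then show ?thesis using Mx_fix_low[of j s W h t b] by (simp add: prev_snoc)
  next
    case False
    then have "s \<le> j" using Suc.prems by simp
    then show ?thesis using Suc.IH by (auto simp: prev_snoc max_def)
  qed
qed

definition cc :: "nat \<Rightarrow> nat \<Rightarrow> real \<Rightarrow> nat \<Rightarrow> real" where
  "cc m d Cr i = Cr * real m / kpar m d ^ i"

definition gg :: "nat \<Rightarrow> nat \<Rightarrow> real \<Rightarrow> nat \<Rightarrow> real" where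
  "gg m d \<gamma> L = max 1 (\<gamma> * real m / kpar m d ^ L)"

definition tcond :: "nat \<Rightarrow> nat \<Rightarrow> real \<Rightarrow> nat \<Rightarrow> step list \<Rightarrow> nat \<Rightarrow> bool" where
  "tcond m d \<gamma> t h l \<longleftrightarrow> real t - real (prev_lvl h l) \<ge> \<gamma> * real m / kpar m d ^ l"

definition volS :: "nat \<Rightarrow> nat \<Rightarrow> real \<Rightarrow> nat \<Rightarrow> step list \<Rightarrow> nat option" where
  "volS m d \<gamma> t h = (if \<exists>l\<le>d. tcond m d \<gamma> t h l then Some (LEAST l. l \<le> d \<and> tcond m d \<gamma> t h l) else None)"

definition frcS :: "nat \<Rightarrow> nat \<Rightarrow> nat \<Rightarrow> step list \<Rightarrow> nat" where
  "frcS d B t h = fs (\<lambda>j. prev_lvl h j \<noteq> t \<and> cnt h j < B) d"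

lemma volS_le: "volS m d \<gamma> t h = Some i \<Longrightarrow> i \<le> d"
  unfolding volS_def by (auto split: if_splits intro: LeastI2_ex)

lemma frcS_le: "frcS d B t h \<le> d"
  unfolding frcS_def by (rule fs_le)

definition mu :: "nat \<Rightarrow> nat \<Rightarrow> nat \<times> step list \<Rightarrow> nat" where
  "mu T d c = (case c of (t, h) \<Rightarrow> (Suc T - t) * (d + 2) + card {j. j \<le> d \<and> prev_lvl h j \<noteq> t})"

lemma mu_fix:
  assumes "s \<le> d" "prev_lvl h s \<noteq> t"
  shows "mu T d (t, h @ [(t,s,b)]) < mu T d (t, h)"
proof -
  have sub: "{j. j \<le> d \<and> prev_lvl (h @ [(t,s,b)]) j \<noteq> t} \<subset> {j. j \<le> d \<and> prev_lvl h j \<noteq> t}"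
    using assms by (auto simp: prev_snoc split: if_splits)
  have "card {j. j \<le> d \<and> prev_lvl (h @ [(t,s,b)]) j \<noteq> t} < card {j. j \<le> d \<and> prev_lvl h j \<noteq> t}"
    by (rule psubset_card_mono[OF _ sub]) auto
  then show ?thesis unfolding mu_def by simp
qed

lemma mu_adv:
  assumes "t \<le> T"
  shows "mu T d (Suc t, h) < mu T d (t, h)"
proof -
  have "card {j. j \<le> d \<and> prev_lvl h j \<noteq> Suc t} \<le> card {..d}"
    by (rule card_mono) auto
  then have c: "card {j. j \<le> d \<and> prev_lvl h j \<noteq> Suc t} \<le> d + 1" by simp
  have a: "Suc T - t = Suc (T - t)" "Suc T - Suc t = T - t" using assms by (simp_all add: Suc_diff_le)
  show ?thesis unfolding mu_def using c a by simp
qed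

definition Inv where
  "Inv m d \<gamma> Cr K T B W c \<longleftrightarrow> (case c of (t, h) \<Rightarrow>
     1 \<le> t \<and> t \<le> Suc T \<and> (\<forall>x\<in>set h. 1 \<le> fst x \<and> fst x \<le> t \<and> fst x \<le> T) \<and>
     (\<forall>j\<le>d. (0 < j \<and> Mx W h j = Mx W h (j - 1)) \<or> Mx W h j * 2 ^ cnt h j < exp K) \<and>
     (\<forall>j\<le>d. 0 < j \<longrightarrow> cnt h j \<le> B) \<and>
     fix_cost m d Cr h \<le> (\<Sum>j\<le>d. cc m d Cr j * cnt h j)
        + (1 + 2 * real B) * (\<Sum>L\<le>d. cc m d Cr L + cc m d Cr L * (real (prev_lvl h L) - 1) / gg m d \<gamma> L))"

context
  fixes m d :: nat and \<gamma> Cr K :: real and T B :: nat and W :: "nat \<Rightarrow> real"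
    and F :: "nat \<Rightarrow> step list \<Rightarrow> bool"
  assumes m: "m > 0" and d: "d > 0" and g0: "0 < \<gamma>" and g1: "\<gamma> < 1" and Cr: "Cr \<ge> 1"
    and K: "K \<ge> 1" and k2: "kpar m d \<ge> 2" and T: "T > 0"
    and Wb: "\<forall>t\<in>{1..T}. W t > 0 \<and> - K < ln (W t) \<and> ln (W t) < K"
    and B: "exp (2 * K) \<le> 2 ^ B"
begin

lemma Wbd: "1 \<le> i \<Longrightarrow> i \<le> T \<Longrightarrow> 0 < W i \<and> exp (- K) < W i \<and> W i < exp K"
proof -
  assume "1 \<le> i" "i \<le> T"
  then have w: "W i > 0" "- K < ln (W i)" "ln (W i) < K" using Wb by auto
  have e: "exp (ln (W i)) = W i" using w by simp
  have a1: "exp (- K) < exp (ln (W i))" using w(2) by (simp only: exp_less_cancel_iff)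
  have a2: "exp (ln (W i)) < exp K" using w(3) by (simp only: exp_less_cancel_iff)
  show ?thesis using a1 a2 w(1) unfolding e by simp
qed

lemma kpos: "kpar m d > 0" using k2 by simp

lemma cc_pos: "cc m d Cr i > 0"
  unfolding cc_def using Cr m kpos by simp

lemma gg_pos: "gg m d \<gamma> i > 0"
  unfolding gg_def by simp

lemma cc_Suc: "2 * cc m d Cr (Suc i) \<le> cc m d Cr i"
proof -
  have "cc m d Cr (Suc i) = cc m d Cr i / kpar m d" unfolding cc_def by (simp add: field_simps)
  moreover have "cc m d Cr i / kpar m d \<le> cc m d Cr i / 2"
    using cc_pos[of i] k2 by (intro divide_left_mono) auto
  ultimately have "cc m d Cr (Suc i) \<le> cc m d Cr i / 2" by simp
  then show ?thesis by simp
qed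

lemma tail_aux: "L \<le> n \<Longrightarrow> (\<Sum>j\<le>n. if L \<le> j then cc m d Cr j else 0) \<le> 2 * cc m d Cr L - cc m d Cr n"
proof (induction n)
  case 0 then show ?case by simp
next
  case (Suc n)
  show ?case
  proof (cases "L = Suc n")
    case True
    then have "(\<Sum>j\<le>n. if L \<le> j then cc m d Cr j else 0) = 0" by (intro sum.neutral) auto
    then show ?thesis using True by simp
  next
    case False
    then have "L \<le> n" using Suc.prems by simp
    then show ?thesis using Suc.IH cc_Suc[of n] by simp
  qed
qed

lemma tail: "(\<Sum>j\<le>n. if L \<le> j then cc m d Cr j else 0) \<le> 2 * cc m d Cr L"
proof (cases "L \<le> n")
  case True then show ?thesis using tail_aux[OF True] cc_pos[of n] by simp
next
  case False
  then have "(\<Sum>j\<le>n. if L \<le> j then cc m d Cr j else 0) = 0" by (intro sum.neutral) auto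
  then show ?thesis using cc_pos[of L] by simp
qed


abbreviation "cc' \<equiv> cc m d Cr"
abbreviation "gg' \<equiv> gg m d \<gamma>"
abbreviation "Inv' \<equiv> Inv m d \<gamma> Cr K T B W"
definition "AA h = (\<Sum>j\<le>d. cc' j * cnt h j)"
definition "pt h L = cc' L + cc' L * (real (prev_lvl h L) - 1) / gg' L"
definition "PP h = (\<Sum>L\<le>d. pt h L)"

lemma Inv_unf: "Inv' (t, h) \<longleftrightarrow> 1 \<le> t \<and> t \<le> Suc T \<and> (\<forall>x\<in>set h. 1 \<le> fst x \<and> fst x \<le> t \<and> fst x \<le> T) \<and>
     (\<forall>j\<le>d. (0 < j \<and> Mx W h j = Mx W h (j - 1)) \<or> Mx W h j * 2 ^ cnt h j < exp K) \<and>
     (\<forall>j\<le>d. 0 < j \<longrightarrow> cnt h j \<le> B) \<and>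
     fix_cost m d Cr h \<le> AA h + (1 + 2 * real B) * PP h"
  unfolding Inv_def AA_def PP_def pt_def by simp

lemma inv_prev:
  assumes "\<forall>x\<in>set h. 1 \<le> fst x \<and> fst x \<le> t \<and> fst x \<le> T" "1 \<le> t"
  shows "1 \<le> prev_lvl h j \<and> prev_lvl h j \<le> t \<and> prev_lvl h j \<le> T"
  using prev_bounds[of h t j] prev_bounds[of h T j] assms T by auto

lemma Mx_lt:
  assumes "\<forall>x\<in>set h. 1 \<le> fst x \<and> fst x \<le> t \<and> fst x \<le> T" "1 \<le> t"
  shows "exp (- K) < Mx W h j \<and> Mx W h j < exp K"
  by (rule Mx_bnd) (use Wbd inv_prev[OF assms] in blast)

lemma big_cnt:
  assumes I: "Inv' (t, h)" and j: "j \<le> d" and c: "B \<le> cnt h j"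
  shows "0 < j \<and> Mx W h j = Mx W h (j - 1)"
proof (rule ccontr)
  assume na: "\<not> (0 < j \<and> Mx W h j = Mx W h (j - 1))"
  then have lt: "Mx W h j * 2 ^ cnt h j < exp K" using I j unfolding Inv_unf by blast
  have mx: "exp (- K) < Mx W h j" using Mx_lt I unfolding Inv_unf by blast
  have "(2::real) ^ B \<le> 2 ^ cnt h j" by (rule power_increasing[OF c]) simp
  then have "exp (2 * K) \<le> (2::real) ^ cnt h j" using B by linarith
  then have "exp (- K) * exp (2 * K) \<le> Mx W h j * 2 ^ cnt h j"
  proof -
    have "0 < exp (- K)" by simp
    then have "0 \<le> Mx W h j" using mx by linarith
    then show ?thesis using mx \<open>exp (2 * K) \<le> (2::real) ^ cnt h j\<close> by (intro mult_mono) auto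
  qed
  moreover have "exp (- K) * exp (2 * K) = exp K" by (simp add: exp_add[symmetric])
  ultimately show False using lt by simp
qed

lemma cnt_le:
  assumes I: "Inv' (t, h)" and j: "j \<le> d"
  shows "cnt h j \<le> B"
proof (cases "j = 0")
  case True
  show ?thesis
  proof (rule ccontr)
    assume "\<not> cnt h j \<le> B"
    then show False using big_cnt[OF I j] True by simp
  qed
next
  case False then show ?thesis using I j unfolding Inv_unf by simp
qed

lemma pt_mono:
  assumes "prev_lvl h L \<le> t"
  shows "pt h L \<le> pt (h @ [(t,s,b)]) L"
proof -
  have "prev_lvl h L \<le> prev_lvl (h @ [(t,s,b)]) L" using assms by (simp add: prev_snoc)
  then have "cc' L * (real (prev_lvl h L) - 1) \<le> cc' L * (real (prev_lvl (h @ [(t,s,b)]) L) - 1)"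
    using cc_pos[of L] by (intro mult_left_mono) auto
  then have "cc' L * (real (prev_lvl h L) - 1) / gg' L \<le> cc' L * (real (prev_lvl (h @ [(t,s,b)]) L) - 1) / gg' L"
    using gg_pos[of L] by (intro divide_right_mono) auto
  then show ?thesis unfolding pt_def by simp
qed

lemma PP_mono:
  assumes "\<And>L. prev_lvl h L \<le> t"
  shows "PP h \<le> PP (h @ [(t,s,b)])"
  unfolding PP_def by (rule sum_mono) (rule pt_mono[OF assms])

lemma vol_step:
  assumes I: "Inv' (t, h)" and tT: "t \<le> T" and v: "volS m d \<gamma> t h = Some L"
  shows "Inv' (t, h @ [(t,L,False)]) \<and> mu T d (t, h @ [(t,L,False)]) < mu T d (t, h)"
proof -
  define h' where "h' = h @ [(t,L,False)]"
  have ex: "\<exists>l\<le>d. tcond m d \<gamma> t h l" and Ld: "L = (LEAST l. l \<le> d \<and> tcond m d \<gamma> t h l)"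
    using v unfolding volS_def by (auto split: if_splits)
  have L: "L \<le> d \<and> tcond m d \<gamma> t h L" unfolding Ld using ex by (rule LeastI_ex)
  have R: "1 \<le> t" "\<forall>x\<in>set h. 1 \<le> fst x \<and> fst x \<le> t \<and> fst x \<le> T" using I unfolding Inv_unf by auto
  have thr: "\<gamma> * real m / kpar m d ^ L > 0" using g0 m kpos by simp
  have tp: "\<gamma> * real m / kpar m d ^ L \<le> real t - real (prev_lvl h L)" using L unfolding tcond_def by simp
  then have pl: "prev_lvl h L < t" using thr by linarith
  then have tp1: "1 \<le> real t - real (prev_lvl h L)" by linarith
  have tpg: "gg' L \<le> real t - real (prev_lvl h L)" unfolding gg_def using tp tp1 by simp
  have R': "\<forall>x\<in>set h'. 1 \<le> fst x \<and> fst x \<le> t \<and> fst x \<le> T" using R tT unfolding h'_def by auto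
  have cnt': "\<And>j. cnt h' j = (if L \<le> j then 0 else cnt h j)" unfolding h'_def by (simp add: cnt_snoc)
  have M: "\<forall>j\<le>d. (0 < j \<and> Mx W h' j = Mx W h' (j - 1)) \<or> Mx W h' j * 2 ^ cnt h' j < exp K"
  proof (intro allI impI)
    fix j assume jd: "j \<le> d"
    show "(0 < j \<and> Mx W h' j = Mx W h' (j - 1)) \<or> Mx W h' j * 2 ^ cnt h' j < exp K"
    proof (cases "L \<le> j")
      case True
      then have "Mx W h' j < exp K" using Mx_lt[OF R' R(1)] by blast
      then show ?thesis using True cnt' by simp
    next
      case False
      then have "Mx W h' j = Mx W h j" "Mx W h' (j - 1) = Mx W h (j - 1)" "cnt h' j = cnt h j"
        unfolding h'_def using Mx_fix_low cnt' h'_def by auto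
      then show ?thesis using I jd unfolding Inv_unf by auto
    qed
  qed
  have Cn: "\<forall>j\<le>d. 0 < j \<longrightarrow> cnt h' j \<le> B" using I cnt' unfolding Inv_unf by auto
  have cost: "fix_cost m d Cr h' = fix_cost m d Cr h + cc' L" unfolding h'_def cost_snoc cc_def by simp
  have A1: "AA h = AA h' + (\<Sum>j\<le>d. if L \<le> j then cc' j * cnt h j else 0)"
    unfolding AA_def sum.distrib[symmetric] by (rule sum.cong) (auto simp: cnt')
  have "(\<Sum>j\<le>d. if L \<le> j then cc' j * cnt h j else 0) \<le> (\<Sum>j\<le>d. real B * (if L \<le> j then cc' j else 0))"
  proof (rule sum_mono)
    fix j assume "j \<in> {..d}"
    then have "cnt h j \<le> B" using cnt_le[OF I] by simp
    then have "cc' j * cnt h j \<le> cc' j * B" using cc_pos[of j] by (intro mult_left_mono) auto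
    then show "(if L \<le> j then cc' j * cnt h j else 0) \<le> real B * (if L \<le> j then cc' j else 0)"
      by (simp add: mult.commute)
  qed
  also have "\<dots> = real B * (\<Sum>j\<le>d. if L \<le> j then cc' j else 0)" by (simp add: sum_distrib_left)
  also have "\<dots> \<le> real B * (2 * cc' L)" by (intro mult_left_mono tail) auto
  finally have A2: "AA h \<le> AA h' + 2 * real B * cc' L" using A1 by simp
  have ptd: "\<And>L'. pt h L' \<le> pt h' L'" unfolding h'_def using inv_prev[OF R(2) R(1)] by (intro pt_mono) auto
  have "pt h' L - pt h L = cc' L * (real t - real (prev_lvl h L)) / gg' L"
    unfolding pt_def h'_def using gg_pos[of L] by (simp add: prev_snoc field_simps)
  also have "\<dots> \<ge> cc' L"
  proof -
    have "cc' L * gg' L \<le> cc' L * (real t - real (prev_lvl h L))"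
      using tpg cc_pos[of L] by (intro mult_left_mono) auto
    then show ?thesis using gg_pos[of L] by (simp add: le_divide_eq)
  qed
  finally have ptL: "cc' L \<le> pt h' L - pt h L" .
  have "PP h' - PP h = (\<Sum>L'\<le>d. pt h' L' - pt h L')" unfolding PP_def by (simp add: sum_subtractf)
  also have "\<dots> \<ge> pt h' L - pt h L"
    by (rule member_le_sum) (use L ptd in auto)
  finally have P1: "PP h + cc' L \<le> PP h'" using ptL by simp
  have "(1 + 2 * real B) * (PP h + cc' L) \<le> (1 + 2 * real B) * PP h'"
    using P1 by (intro mult_left_mono) auto
  then have P2: "(1 + 2 * real B) * PP h + (1 + 2 * real B) * cc' L \<le> (1 + 2 * real B) * PP h'"
    by (simp add: algebra_simps)
  have "fix_cost m d Cr h \<le> AA h + (1 + 2 * real B) * PP h" using I unfolding Inv_unf by simp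
  then have Co: "fix_cost m d Cr h' \<le> AA h' + (1 + 2 * real B) * PP h'"
    using cost A2 P2 by (simp add: algebra_simps)
  have "Inv' (t, h')" unfolding Inv_unf using R R' tT M Cn Co by simp
  moreover have "mu T d (t, h') < mu T d (t, h)" unfolding h'_def using L pl by (intro mu_fix) auto
  ultimately show ?thesis unfolding h'_def by simp
qed


lemma forced_step:
  assumes I: "Inv' (t, h)" and tT: "t \<le> T" and v: "volS m d \<gamma> t h = None"
    and mf: "may_force m d \<gamma> W t h"
  shows "Inv' (t, h @ [(t, frcS d B t h, True)]) \<and> mu T d (t, h @ [(t, frcS d B t h, True)]) < mu T d (t, h)"
proof -
  define s where "s = frcS d B t h"
  define ok where "ok = (\<lambda>j. prev_lvl h j \<noteq> t \<and> cnt h j < B)"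
  have s_fs: "s = fs ok d" unfolding s_def frcS_def ok_def by simp
  define h' where "h' = h @ [(t,s,True)]"
  have sd: "s \<le> d" unfolding s_def by (rule frcS_le)
  have R: "1 \<le> t" "\<forall>x\<in>set h. 1 \<le> fst x \<and> fst x \<le> t \<and> fst x \<le> T" using I unfolding Inv_unf by auto
  have Wt: "0 < W t" using Wbd R(1) tT by blast
  have notc: "\<not> (\<exists>l\<le>d. tcond m d \<gamma> t h l)" using v unfolding volS_def by (auto split: if_splits)
  have wc: "(\<Sum>i\<le>d. W (prev_lvl h i)) > 2 * (real d + 1) * W t"
    using mf notc unfolding may_force_def tcond_def by auto
  have eq: "W (prev_lvl h l) = W t \<or> Mx W h l = Mx W h (l - 1)" if "s < l" "l \<le> d" for l
  proof -
    have "\<not> ok l" using fs_skip[of ok d l] that s_fs by simp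
    then have "prev_lvl h l = t \<or> B \<le> cnt h l" unfolding ok_def by auto
    then show ?thesis using big_cnt[OF I \<open>l \<le> d\<close>] by auto
  qed
  have bnd: "s \<le> l \<Longrightarrow> l \<le> d \<Longrightarrow> Mx W h l \<le> max (Mx W h s) (W t)" for l
  proof (induction l)
    case 0 then show ?case by simp
  next
    case (Suc l)
    show ?case
    proof (cases "s = Suc l")
      case True then show ?thesis by simp
    next
      case False
      then have sl: "s \<le> l" "l \<le> d" using Suc.prems by auto
      have "W (prev_lvl h (Suc l)) = W t \<or> Mx W h (Suc l) = Mx W h l"
        using eq[of "Suc l"] False Suc.prems by simp
      then show ?thesis using Suc.IH[OF sl] by auto
    qed
  qed
  have key: "Mx W h s > 2 * W t"
  proof (rule ccontr)
    assume "\<not> Mx W h s > 2 * W t"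
    then have mxs: "max (Mx W h s) (W t) \<le> 2 * W t" using Wt by simp
    have "(\<Sum>i\<le>d. W (prev_lvl h i)) \<le> (\<Sum>i\<le>d. 2 * W t)"
    proof (rule sum_mono)
      fix i assume "i \<in> {..d}"
      then have "W (prev_lvl h i) \<le> Mx W h d" by (intro W_le_Mx) simp
      also have "\<dots> \<le> max (Mx W h s) (W t)" using bnd[of d] sd by simp
      finally show "W (prev_lvl h i) \<le> 2 * W t" using mxs by (rule order_trans)
    qed
    then show False using wc by (simp add: algebra_simps)
  qed
  have ps: "prev_lvl h s \<noteq> t"
  proof (cases "ok s")
    case True then show ?thesis unfolding ok_def by simp
  next
    case False
    then have "s = 0" using fs_ok[of ok d] s_fs by auto
    then show ?thesis using key Wt by auto
  qed
  have R': "\<forall>x\<in>set h'. 1 \<le> fst x \<and> fst x \<le> t \<and> fst x \<le> T" using R tT unfolding h'_def by auto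
  have cnt': "\<And>j. cnt h' j = (if j = s then Suc (cnt h j) else cnt h j)" unfolding h'_def by (simp add: cnt_snoc)
  have Mlow: "\<And>j. j < s \<Longrightarrow> Mx W h' j = Mx W h j" unfolding h'_def by (rule Mx_fix_low)
  have Mhigh: "\<And>j. s \<le> j \<Longrightarrow> Mx W h' j = (if s = 0 then W t else max (Mx W h (s - 1)) (W t))"
    unfolding h'_def by (rule Mx_fix_high)
  have M: "\<forall>j\<le>d. (0 < j \<and> Mx W h' j = Mx W h' (j - 1)) \<or> Mx W h' j * 2 ^ cnt h' j < exp K"
  proof (intro allI impI)
    fix j assume jd: "j \<le> d"
    have Ij: "(0 < j \<and> Mx W h j = Mx W h (j - 1)) \<or> Mx W h j * 2 ^ cnt h j < exp K"
      using I jd unfolding Inv_unf by blast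
    show "(0 < j \<and> Mx W h' j = Mx W h' (j - 1)) \<or> Mx W h' j * 2 ^ cnt h' j < exp K"
    proof (cases "j < s")
      case True
      then show ?thesis using Ij Mlow[of j] Mlow[of "j - 1"] cnt'[of j] by auto
    next
      case False
      show ?thesis
      proof (cases "j = s")
        case False': False
        then have "s \<le> j - 1" "0 < j" using False by auto
        then show ?thesis using Mhigh[of j] Mhigh[of "j - 1"] False by auto
      next
        case js: True
        have c2: "Mx W h' s * 2 ^ cnt h' s < exp K" if hs: "Mx W h' s = W t" and old: "Mx W h s * 2 ^ cnt h s < exp K"
        proof -
          have "Mx W h' s * 2 ^ cnt h' s = (2 * W t) * 2 ^ cnt h s" using hs cnt'[of s] by simp
          also have "\<dots> < Mx W h s * 2 ^ cnt h s" using key by (intro mult_strict_right_mono) auto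
          finally show ?thesis using old by simp
        qed
        show ?thesis
        proof (cases "s = 0")
          case True
          then have "Mx W h s * 2 ^ cnt h s < exp K" using Ij js by simp
          then show ?thesis using c2 Mhigh[of s] True js by simp
        next
          case s0: False
          have Ml: "Mx W h' (s - 1) = Mx W h (s - 1)" using Mlow s0 by simp
          show ?thesis
          proof (cases "W t \<le> Mx W h (s - 1)")
            case True
            then have "Mx W h' s = Mx W h' (s - 1)" using Mhigh[of s] Ml s0 by simp
            then show ?thesis using js s0 by simp
          next
            case lt: False
            then have hs: "Mx W h' s = W t" using Mhigh[of s] s0 by simp
            have "Mx W h s \<noteq> Mx W h (s - 1)" using lt key Wt by auto
            then have "Mx W h s * 2 ^ cnt h s < exp K" using Ij js by auto
            then show ?thesis using c2 hs js by simp
          qed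
        qed
      qed
    qed
  qed
  have Cn: "\<forall>j\<le>d. 0 < j \<longrightarrow> cnt h' j \<le> B"
  proof (intro allI impI)
    fix j assume "j \<le> d" "0 < j"
    show "cnt h' j \<le> B"
    proof (cases "j = s")
      case True
      then have "ok s" using fs_ok[of ok d] s_fs \<open>0 < j\<close> by auto
      then show ?thesis using cnt' True unfolding ok_def by simp
    next
      case False then show ?thesis using cnt'[of j] I \<open>j \<le> d\<close> \<open>0 < j\<close> unfolding Inv_unf by simp
    qed
  qed
  have cost: "fix_cost m d Cr h' = fix_cost m d Cr h + cc' s" unfolding h'_def cost_snoc cc_def by simp
  have "AA h' = (\<Sum>j\<le>d. cc' j * cnt h j + (if j = s then cc' j else 0))"
    unfolding AA_def by (rule sum.cong) (auto simp: cnt' algebra_simps)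
  also have "\<dots> = AA h + cc' s" unfolding AA_def sum.distrib using sd by simp
  finally have A: "AA h' = AA h + cc' s" .
  have "PP h \<le> PP h'" unfolding h'_def using inv_prev[OF R(2) R(1)] by (intro PP_mono) auto
  then have P: "(1 + 2 * real B) * PP h \<le> (1 + 2 * real B) * PP h'" by (intro mult_left_mono) auto
  have "fix_cost m d Cr h \<le> AA h + (1 + 2 * real B) * PP h" using I unfolding Inv_unf by simp
  then have Co: "fix_cost m d Cr h' \<le> AA h' + (1 + 2 * real B) * PP h'" using cost A P by linarith
  have "Inv' (t, h')" unfolding Inv_unf using R R' tT M Cn Co by simp
  moreover have "mu T d (t, h') < mu T d (t, h)" unfolding h'_def using sd ps by (intro mu_fix) auto
  ultimately show ?thesis unfolding h'_def s_def by simp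
qed


abbreviation "stp \<equiv> game_step m d \<gamma> T (volS m d \<gamma>) (frcS d B) W F"
abbreviation "cfg n \<equiv> game_config m d \<gamma> T (volS m d \<gamma>) (frcS d B) W F n"

lemma step_ok:
  assumes I: "Inv' (t, h)" and tT: "t \<le> T"
  shows "Inv' (stp (t, h)) \<and> mu T d (stp (t, h)) < mu T d (t, h)"
proof (cases "volS m d \<gamma> t h")
  case (Some L)
  then have "stp (t, h) = (t, h @ [(t, L, False)])" using tT by (simp add: game_step_def)
  then show ?thesis using vol_step[OF I tT Some] by simp
next
  case None
  show ?thesis
  proof (cases "F t h \<and> may_force m d \<gamma> W t h")
    case True
    then have "stp (t, h) = (t, h @ [(t, frcS d B t h, True)])" using tT None by (simp add: game_step_def)
    then show ?thesis using forced_step[OF I tT None] True by simp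
  next
    case False
    then have e: "stp (t, h) = (Suc t, h)" using tT None by (simp add: game_step_def)
    have "Inv' (Suc t, h)" using I tT unfolding Inv_unf by auto
    then show ?thesis using e mu_adv[OF tT] by simp
  qed
qed

lemma step_id: "T < t \<Longrightarrow> stp (t, h) = (t, h)"
  by (simp add: game_step_def)

lemma cfg_Suc: "cfg (Suc n) = stp (cfg n)"
  unfolding game_config_def by simp

lemma Inv_init: "Inv' (1, [])"
proof -
  have M: "Mx W [] j < exp K" for j using Mx_lt[of "[]" 1] by simp
  have "0 \<le> PP []" unfolding PP_def pt_def using cc_pos by (intro sum_nonneg) (simp add: prev_nil less_imp_le)
  then have "0 \<le> (1 + 2 * real B) * PP []" by simp
  then show ?thesis unfolding Inv_unf using T M by (simp add: cnt_nil cost_nil AA_def)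
qed

lemma reach: "Inv' (cfg n)"
proof (induction n)
  case 0 then show ?case using Inv_init by (simp add: game_config_def)
next
  case (Suc n)
  obtain t h where th: "cfg n = (t, h)" by (cases "cfg n") auto
  show ?case
  proof (cases "t \<le> T")
    case True then show ?thesis using step_ok[of t h] Suc th cfg_Suc by simp
  next
    case False then show ?thesis using step_id[of t h] Suc th cfg_Suc by simp
  qed
qed

lemma ex_end: "\<exists>n. T < fst (cfg n)"
proof (rule ccontr)
  assume na: "\<not> (\<exists>n. T < fst (cfg n))"
  have "mu T d (cfg n) + n \<le> mu T d (cfg 0)" for n
  proof (induction n)
    case 0 then show ?case by simp
  next
    case (Suc n)
    obtain t h where th: "cfg n = (t, h)" by (cases "cfg n") auto
    have "t \<le> T" using na th by (metis fst_conv not_le)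
    then have "mu T d (cfg (Suc n)) < mu T d (cfg n)" using step_ok[of t h] reach[of n] th cfg_Suc by simp
    then show ?case using Suc.IH by simp
  qed
  from this[of "Suc (mu T d (cfg 0))"] show False by simp
qed

lemma final_cost:
  assumes I: "Inv' (t, h)"
  shows "fix_cost m d Cr h \<le> 2 * real B * (Cr * real m) + (1 + 2 * real B) * (2 * (Cr * real m) + (real d + 1) * (Cr * real T / \<gamma>))"
proof -
  have R: "1 \<le> t" "\<forall>x\<in>set h. 1 \<le> fst x \<and> fst x \<le> t \<and> fst x \<le> T" using I unfolding Inv_unf by auto
  have cc0: "cc' 0 = Cr * real m" unfolding cc_def by simp
  have sumcc: "(\<Sum>j\<le>d. cc' j) \<le> 2 * (Cr * real m)"
    using tail[of 0 d] cc0 by simp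
  have "AA h \<le> (\<Sum>j\<le>d. real B * cc' j)" unfolding AA_def
  proof (rule sum_mono)
    fix j assume "j \<in> {..d}"
    then have "cnt h j \<le> B" using cnt_le[OF I] by simp
    then have "cc' j * cnt h j \<le> cc' j * B" using cc_pos[of j] by (intro mult_left_mono) auto
    then show "cc' j * real (cnt h j) \<le> real B * cc' j" by (simp add: mult.commute)
  qed
  also have "\<dots> = real B * (\<Sum>j\<le>d. cc' j)" by (simp add: sum_distrib_left)
  also have "\<dots> \<le> real B * (2 * (Cr * real m))" using sumcc by (intro mult_left_mono) auto
  finally have A: "AA h \<le> 2 * real B * (Cr * real m)" by simp
  have ptb: "pt h L \<le> cc' L + Cr * real T / \<gamma>" for L
  proof -
    have p: "1 \<le> prev_lvl h L" "prev_lvl h L \<le> T" using inv_prev[OF R(2) R(1)] by auto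
    have "cc' L = (Cr / \<gamma>) * (\<gamma> * real m / kpar m d ^ L)" unfolding cc_def using g0 by simp
    also have "\<dots> \<le> (Cr / \<gamma>) * gg' L" unfolding gg_def using Cr g0 by (intro mult_left_mono) auto
    finally have c1: "cc' L \<le> (Cr / \<gamma>) * gg' L" .
    have "cc' L * (real (prev_lvl h L) - 1) \<le> (Cr / \<gamma>) * gg' L * (real (prev_lvl h L) - 1)"
      using c1 p by (intro mult_right_mono) auto
    then have "cc' L * (real (prev_lvl h L) - 1) / gg' L \<le> (Cr / \<gamma>) * (real (prev_lvl h L) - 1)"
      using gg_pos[of L] by (simp add: divide_le_eq mult.commute mult.left_commute)
    also have "\<dots> \<le> (Cr / \<gamma>) * real T" using p Cr g0 by (intro mult_left_mono) auto
    finally show ?thesis unfolding pt_def by simp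
  qed
  have "PP h \<le> (\<Sum>L\<le>d. cc' L + Cr * real T / \<gamma>)" unfolding PP_def by (rule sum_mono) (rule ptb)
  also have "\<dots> = (\<Sum>L\<le>d. cc' L) + (real d + 1) * (Cr * real T / \<gamma>)" by (simp add: sum.distrib)
  also have "\<dots> \<le> 2 * (Cr * real m) + (real d + 1) * (Cr * real T / \<gamma>)" using sumcc by simp
  finally have P: "PP h \<le> 2 * (Cr * real m) + (real d + 1) * (Cr * real T / \<gamma>)" .
  have P2: "(1 + 2 * real B) * PP h \<le> (1 + 2 * real B) * (2 * (Cr * real m) + (real d + 1) * (Cr * real T / \<gamma>))"
    using P by (intro mult_left_mono) auto
  have "fix_cost m d Cr h \<le> AA h + (1 + 2 * real B) * PP h" using I unfolding Inv_unf by simp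
  then show ?thesis using A P2 by linarith
qed

lemma final_thm:
  assumes BK: "real B \<le> 8 * K"
  shows "\<exists>n. T < fst (cfg n) \<and>
     fix_cost m d Cr (snd (cfg n)) + real T \<le> 60 * (Cr * K * real d / \<gamma>) * (real m + real T)"
proof -
  obtain n where n: "T < fst (cfg n)" using ex_end by blast
  obtain t h where th: "cfg n = (t, h)" by (cases "cfg n") auto
  have fc: "fix_cost m d Cr h \<le> 2 * real B * (Cr * real m) + (1 + 2 * real B) * (2 * (Cr * real m) + (real d + 1) * (Cr * real T / \<gamma>))"
    using final_cost reach[of n] th by simp
  define Y where "Y = Cr * real d / \<gamma>"
  have d1: "1 \<le> real d" using d by simp
  have Y1: "Cr \<le> Y" unfolding Y_def using Cr g0 g1 d1
    by (simp add: le_divide_eq)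
  have Yp: "1 \<le> Y" using Y1 Cr by simp
  have Q: "2 * (Cr * real m) + (real d + 1) * (Cr * real T / \<gamma>) \<le> 2 * Y * (real m + real T)"
  proof -
    have a: "Cr * real m \<le> Y * real m" using Y1 by (intro mult_right_mono) auto
    have "(real d + 1) * (Cr * real T / \<gamma>) \<le> (2 * real d) * (Cr * real T / \<gamma>)"
      using d1 Cr g0 by (intro mult_right_mono) auto
    also have "\<dots> = 2 * Y * real T" unfolding Y_def by simp
    finally show ?thesis using a by (simp add: algebra_simps)
  qed
  have B1: "1 + 2 * real B \<le> 17 * K" using BK K by simp
  have "(1 + 2 * real B) * (2 * (Cr * real m) + (real d + 1) * (Cr * real T / \<gamma>)) \<le> (17 * K) * (2 * Y * (real m + real T))"
    using B1 Q Cr g0 by (intro mult_mono) auto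
  moreover have "2 * real B * (Cr * real m) \<le> (16 * K) * (Y * (real m + real T))"
  proof -
    have h1: "Cr * real m \<le> Y * (real m + real T)" using Y1 Cr by (intro mult_mono) auto
    have h2: "2 * real B \<le> 16 * K" using BK by simp
    have "0 \<le> Cr * real m" using Cr by simp
    then show ?thesis using mult_mono[OF h2 h1] K by simp
  qed
  moreover have "real T \<le> K * Y * (real m + real T)"
  proof -
    have "1 \<le> K * Y" using K Yp by (metis mult_mono' mult_1_left zero_le_one order_trans)
    then have "real T \<le> K * Y * real T" by (simp add: mult_le_cancel_right1)
    then show ?thesis using K Yp by (simp add: algebra_simps) (smt (verit) mult_nonneg_nonneg of_nat_0_le_iff)
  qed
  ultimately have "fix_cost m d Cr h + real T \<le> 51 * (K * Y) * (real m + real T)"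
    using fc by (simp add: algebra_simps)
  also have "\<dots> \<le> 60 * (K * Y) * (real m + real T)"
    using K Yp by (intro mult_right_mono) auto
  finally show ?thesis using n th unfolding Y_def by (intro exI[of _ n]) (simp add: algebra_simps)
qed

end

theorem lemma8p3:
  "\<exists>c>0. \<forall>(m::nat) (d::nat) (\<gamma>::real) (Cr::real) (K::real) (T::nat).
     m > 0 \<longrightarrow> d > 0 \<longrightarrow> 0 < \<gamma> \<longrightarrow> \<gamma> < 1 \<longrightarrow> Cr \<ge> 1 \<longrightarrow> K \<ge> 1 \<longrightarrow>
     kpar m d \<ge> 2 \<longrightarrow> T > 0 \<longrightarrow>
     (\<exists>(vol :: nat \<Rightarrow> step list \<Rightarrow> nat option) (frc :: nat \<Rightarrow> step list \<Rightarrow> nat).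
        (\<forall>t h i. vol t h = Some i \<longrightarrow> i \<le> d) \<and> (\<forall>t h. frc t h \<le> d) \<and>
        (\<forall>(W :: nat \<Rightarrow> real) (F :: nat \<Rightarrow> step list \<Rightarrow> bool).
           (\<forall>t\<in>{1..T}. W t > 0 \<and> - K < ln (W t) \<and> ln (W t) < K) \<longrightarrow>
           (\<exists>n. T < fst (game_config m d \<gamma> T vol frc W F n) \<and>
                fix_cost m d Cr (snd (game_config m d \<gamma> T vol frc W F n)) + real T
                  \<le> c * (Cr * K * real d / \<gamma>) * (real m + real T))))"
proof (intro exI[of _ "60::real"] conjI allI impI)
  show "(0::real) < 60" by simp
next
  fix m d :: nat and \<gamma> Cr K :: real and T :: nat
  assume m: "m > 0" and d: "d > 0" and g0: "0 < \<gamma>" and g1: "\<gamma> < 1" and Cr: "Cr \<ge> 1"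
    and K: "K \<ge> 1" and k2: "kpar m d \<ge> 2" and T: "T > 0"
  define B where "B = 4 * nat \<lceil>K\<rceil>"
  have Bexp: "exp (2 * K) \<le> 2 ^ B"
  proof -
    have "exp (2 * K) \<le> exp (2 * real (nat \<lceil>K\<rceil>))" using K by simp
    also have "\<dots> \<le> 2 ^ (4 * nat \<lceil>K\<rceil>)" by (rule exp_pow_bound)
    finally show ?thesis unfolding B_def .
  qed
  have BK: "real B \<le> 8 * K"
  proof -
    have c: "real_of_int \<lceil>K\<rceil> \<le> K + 1" by (rule of_int_ceiling_le_add_one)
    have e: "real (nat \<lceil>K\<rceil>) = real_of_int \<lceil>K\<rceil>" using K by simp
    have "real B = 4 * real (nat \<lceil>K\<rceil>)" unfolding B_def by simp
    then show ?thesis using c e K by linarith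
  qed
  show "\<exists>(vol :: nat \<Rightarrow> step list \<Rightarrow> nat option) (frc :: nat \<Rightarrow> step list \<Rightarrow> nat).
        (\<forall>t h i. vol t h = Some i \<longrightarrow> i \<le> d) \<and> (\<forall>t h. frc t h \<le> d) \<and>
        (\<forall>(W :: nat \<Rightarrow> real) (F :: nat \<Rightarrow> step list \<Rightarrow> bool).
           (\<forall>t\<in>{1..T}. W t > 0 \<and> - K < ln (W t) \<and> ln (W t) < K) \<longrightarrow>
           (\<exists>n. T < fst (game_config m d \<gamma> T vol frc W F n) \<and>
                fix_cost m d Cr (snd (game_config m d \<gamma> T vol frc W F n)) + real T
                  \<le> 60 * (Cr * K * real d / \<gamma>) * (real m + real T)))"
  proof (intro exI[of _ "volS m d \<gamma>"] exI[of _ "frcS d B"] conjI allI impI)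
    show "\<And>t h i. volS m d \<gamma> t h = Some i \<Longrightarrow> i \<le> d" by (rule volS_le)
    show "\<And>t h. frcS d B t h \<le> d" by (rule frcS_le)
    fix W :: "nat \<Rightarrow> real" and F :: "nat \<Rightarrow> step list \<Rightarrow> bool"
    assume Wb: "\<forall>t\<in>{1..T}. W t > 0 \<and> - K < ln (W t) \<and> ln (W t) < K"
    show "\<exists>n. T < fst (game_config m d \<gamma> T (volS m d \<gamma>) (frcS d B) W F n) \<and>
                fix_cost m d Cr (snd (game_config m d \<gamma> T (volS m d \<gamma>) (frcS d B) W F n)) + real T
                  \<le> 60 * (Cr * K * real d / \<gamma>) * (real m + real T)"
      by (rule final_thm[OF m d g0 g1 Cr K k2 T Wb Bexp BK])
  qed
qed

end
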